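(* Let $d>0$, $a\geq 7$ be integers with $\gcd(a,d)=1$, write $a=6m+q$ with $0\leq q\leq 5$, and let $\mathfrak{p}_4\subset A=k[x_1,x_2,x_3,x_4]$ be the kernel of the $k$-algebra map $A\to k[t]$, $x_1\mapsto t^{a}$, $x_2\mapsto t^{2a+d}$, $x_3\mapsto t^{3a+3d}$, $x_4\mapsto t^{4a+6d}$ ($k$ a field). Then $\mathfrak{p}_4$ is minimally generated by the set $H_q$, where: $H_0=\{x_3^2-x_1^2x_4,\ x_2^3-x_1^3x_3,\ x_1^{4m+d}-x_4^{m}\}$; $H_1=\{x_3^2-x_1^2x_4,\ x_2^3-x_1^3x_3,\ x_1^{7}-x_2x_4,\ x_1^{4}x_2^{2}-x_3x_4,\ x_1^{2}x_2^{2}x_3-x_4^{2}\}$ if $m=d=1$, and otherwise $H_1=\{x_3^2-x_1^2x_4,\ x_2^3-x_1^3x_3,\ x_1^{4m+d-6}x_2^{5}-x_4^{m+1},\ x_1^{4m+d-1}x_2^{2}-x_3x_4^{m},\ x_1^{4m+d+2}-x_2x_4^{m}\}$; $H_2=\{x_3^2-x_1^2x_4,\ x_2^3-x_1^3x_3,\ x_1^{4m+d-4}x_2^{4}-x_4^{m+1},\ x_1^{4m+d+1}x_2-x_3x_4^{m},\ x_1^{4m+d+4}-x_2^{2}x_4^{m}\}$; $H_3=\{x_3^2-x_1^2x_4,\ x_2^3-x_1^3x_3,\ x_1^{4m+d-2}x_2^{3}-x_4^{m+1},\ x_1^{4m+d+3}-x_3x_4^{m}\}$; $H_4=\{x_3^2-x_1^2x_4,\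 x_2^3-x_1^3x_3,\ x_1^{4m+d}x_2^{2}-x_4^{m+1},\ x_1^{4m+d+5}-x_2x_3x_4^{m}\}$; $H_5=\{x_3^2-x_1^2x_4,\ x_2^3-x_1^3x_3,\ x_1^{4m+d+2}x_2-x_4^{m+1},\ x_1^{4m+d+7}-x_2^{2}x_3x_4^{m}\}$. *)

theory Defs
  imports "HOL-Library.Poly_Mapping" "HOL-Computational_Algebra.Polynomial"
begin

datatype var4 = V1 | V2 | V3 | V4

type_synonym 'k mpoly4 = "(var4 \<Rightarrow>\<^sub>0 nat) \<Rightarrow>\<^sub>0 'k"

definition xv :: "var4 \<Rightarrow> 'k::field mpoly4" where
  "xv v = Poly_Mapping.single (Poly_Mapping.single v 1) 1"

abbreviation "x1 \<equiv> xv V1"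
abbreviation "x2 \<equiv> xv V2"
abbreviation "x3 \<equiv> xv V3"
abbreviation "x4 \<equiv> xv V4"

fun wt :: "nat \<Rightarrow> nat \<Rightarrow> var4 \<Rightarrow> nat" where
  "wt a d V1 = a"
| "wt a d V2 = 2*a + d"
| "wt a d V3 = 3*a + 3*d"
| "wt a d V4 = 4*a + 6*d"

definition phi :: "nat \<Rightarrow> nat \<Rightarrow> 'k::field mpoly4 \<Rightarrow> 'k poly" where
  "phi a d p = (\<Sum>\<alpha>\<in>Poly_Mapping.keys p.
      Polynomial.monom (Poly_Mapping.lookup p \<alpha>)
        (\<Sum>v\<in>Poly_Mapping.keys \<alpha>. Poly_Mapping.lookup \<alpha> v * wt a d v))"

definition kernel_p4 :: "nat \<Rightarrow> nat \<Rightarrow> 'k::field mpoly4 set" where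
  "kernel_p4 a d = {p. phi a d p = 0}"

definition ideal_gen :: "'k::field mpoly4 set \<Rightarrow> 'k mpoly4 set" where
  "ideal_gen S = {p. \<exists>F c. finite F \<and> F \<subseteq> S \<and> p = (\<Sum>h\<in>F. c h * h)}"

definition minimally_generates :: "'k::field mpoly4 set \<Rightarrow> 'k mpoly4 set \<Rightarrow> bool" where
  "minimally_generates S I \<longleftrightarrow> ideal_gen S = I \<and> (\<forall>T. T \<subset> S \<longrightarrow> ideal_gen T \<noteq> I)"

definition Hset :: "nat \<Rightarrow> nat \<Rightarrow> 'k::field mpoly4 set" where
  "Hset a d = (let m = a div 6; q = a mod 6 in
    if q = 0 then
      {x3^2 - x1^2*x4, x2^3 - x1^3*x3, x1^(4*m+d) - x4^m}
    else if q = 1 then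
      (if m = 1 \<and> d = 1 then
        {x3^2 - x1^2*x4, x2^3 - x1^3*x3, x1^7 - x2*x4, x1^4*x2^2 - x3*x4,
         x1^2*x2^2*x3 - x4^2}
       else
        {x3^2 - x1^2*x4, x2^3 - x1^3*x3, x1^(4*m+d-6)*x2^5 - x4^(m+1),
         x1^(4*m+d-1)*x2^2 - x3*x4^m, x1^(4*m+d+2) - x2*x4^m})
    else if q = 2 then
      {x3^2 - x1^2*x4, x2^3 - x1^3*x3, x1^(4*m+d-4)*x2^4 - x4^(m+1),
       x1^(4*m+d+1)*x2 - x3*x4^m, x1^(4*m+d+4) - x2^2*x4^m}
    else if q = 3 then
      {x3^2 - x1^2*x4, x2^3 - x1^3*x3, x1^(4*m+d-2)*x2^3 - x4^(m+1),
       x1^(4*m+d+3) - x3*x4^m}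
    else if q = 4 then
      {x3^2 - x1^2*x4, x2^3 - x1^3*x3, x1^(4*m+d)*x2^2 - x4^(m+1),
       x1^(4*m+d+5) - x2*x3*x4^m}
    else
      {x3^2 - x1^2*x4, x2^3 - x1^3*x3, x1^(4*m+d+2)*x2 - x4^(m+1),
       x1^(4*m+d+7) - x2^2*x3*x4^m})"

end

theory Submission
  imports Defs
begin


lemma UNIV_var4: "(UNIV :: var4 set) = {V1,V2,V3,V4}"
  using var4.exhaust by auto

lemma finite_var4[simp]: "finite (UNIV :: var4 set)"
  by (simp add: UNIV_var4)

definition Wm :: "nat \<Rightarrow> nat \<Rightarrow> (var4 \<Rightarrow>\<^sub>0 nat) \<Rightarrow> nat" where
  "Wm a d \<alpha> = (\<Sum>v\<in>Poly_Mapping.keys \<alpha>. Poly_Mapping.lookup \<alpha> v * wt a d v)"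

lemma Wm_explicit: "Wm a d \<alpha> = Poly_Mapping.lookup \<alpha> V1 * a + Poly_Mapping.lookup \<alpha> V2 * (2*a+d)
   + Poly_Mapping.lookup \<alpha> V3 * (3*a+3*d) + Poly_Mapping.lookup \<alpha> V4 * (4*a+6*d)"
proof -
  have "Wm a d \<alpha> = (\<Sum>v\<in>UNIV. Poly_Mapping.lookup \<alpha> v * wt a d v)"
    unfolding Wm_def
    by (rule sum.mono_neutral_left) (auto simp: in_keys_iff UNIV_var4[symmetric])
  also have "\<dots> = Poly_Mapping.lookup \<alpha> V1 * a + Poly_Mapping.lookup \<alpha> V2 * (2*a+d)
   + Poly_Mapping.lookup \<alpha> V3 * (3*a+3*d) + Poly_Mapping.lookup \<alpha> V4 * (4*a+6*d)"
    by (simp add: UNIV_var4 add.assoc)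
  finally show ?thesis .
qed

lemma Wm_add: "Wm a d (\<alpha> + \<beta>) = Wm a d \<alpha> + Wm a d \<beta>"
  by (simp add: Wm_explicit lookup_add algebra_simps)

lemma phi_Wm: "phi a d p = (\<Sum>\<alpha>\<in>Poly_Mapping.keys p. monom (Poly_Mapping.lookup p \<alpha>) (Wm a d \<alpha>))"
  unfolding phi_def Wm_def ..

lemma phi_K: "finite K \<Longrightarrow> Poly_Mapping.keys p \<subseteq> K \<Longrightarrow>
   phi a d p = (\<Sum>\<alpha>\<in>K. monom (Poly_Mapping.lookup p \<alpha>) (Wm a d \<alpha>))"
  unfolding phi_Wm
  by (rule sum.mono_neutral_left) (auto simp: in_keys_iff)

lemma phi_add: "phi a d (p + q) = phi a d p + phi a d q"
proof -
  let ?K = "Poly_Mapping.keys p \<union> Poly_Mapping.keys q"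
  have "Poly_Mapping.keys (p+q) \<subseteq> ?K" by (rule keys_add)
  then have "phi a d (p+q) = (\<Sum>\<alpha>\<in>?K. monom (Poly_Mapping.lookup (p+q) \<alpha>) (Wm a d \<alpha>))"
    by (intro phi_K) auto
  also have "\<dots> = (\<Sum>\<alpha>\<in>?K. monom (Poly_Mapping.lookup p \<alpha>) (Wm a d \<alpha>)) + (\<Sum>\<alpha>\<in>?K. monom (Poly_Mapping.lookup q \<alpha>) (Wm a d \<alpha>))"
    by (simp add: lookup_add add_monom[symmetric] sum.distrib)
  also have "\<dots> = phi a d p + phi a d q"
    by (subst (1 2) phi_K[of ?K]) auto
  finally show ?thesis .
qed

lemma phi_uminus: "phi a d (- p) = - phi a d p"
  by (simp add: phi_Wm keys_minus sum_negf[symmetric] minus_monom)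

lemma phi_diff: "phi a d (p - q) = phi a d p - phi a d q"
  using phi_add[of a d p "-q"] by (simp add: phi_uminus)

lemma phi_zero[simp]: "phi a d 0 = 0"
  by (simp add: phi_Wm)

lemma phi_single: "phi a d (Poly_Mapping.single \<alpha> c) = monom c (Wm a d \<alpha>)"
  by (simp add: phi_Wm)

lemma phi_sum: "phi a d (\<Sum>i\<in>A. f i) = (\<Sum>i\<in>A. phi a d (f i))"
  by (induction A rule: infinite_finite_induct) (auto simp: phi_add)

lemma pm_decomp: "p = (\<Sum>\<alpha>\<in>Poly_Mapping.keys p. Poly_Mapping.single \<alpha> (Poly_Mapping.lookup p \<alpha>))"
  by (rule poly_mapping_eqI) (auto simp: lookup_sum lookup_single when_def in_keys_iff
      intro!: sum.neutral[symmetric] elim!: sum.mono_neutral_right)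

lemma phi_mult: "phi a d (p * q) = phi a d p * phi a d q"
proof -
  have "p * q = (\<Sum>\<alpha>\<in>Poly_Mapping.keys p. Poly_Mapping.single \<alpha> (Poly_Mapping.lookup p \<alpha>)) *
     (\<Sum>\<beta>\<in>Poly_Mapping.keys q. Poly_Mapping.single \<beta> (Poly_Mapping.lookup q \<beta>))"
    using pm_decomp[of p] pm_decomp[of q] by simp
  also have "\<dots> = (\<Sum>\<alpha>\<in>Poly_Mapping.keys p. \<Sum>\<beta>\<in>Poly_Mapping.keys q. Poly_Mapping.single (\<alpha>+\<beta>) (Poly_Mapping.lookup p \<alpha> * Poly_Mapping.lookup q \<beta>))"
    by (simp add: sum_product mult_single)
  finally have "phi a d (p*q) = (\<Sum>\<alpha>\<in>Poly_Mapping.keys p. \<Sum>\<beta>\<in>Poly_Mapping.keys q.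
      monom (Poly_Mapping.lookup p \<alpha>) (Wm a d \<alpha>) * monom (Poly_Mapping.lookup q \<beta>) (Wm a d \<beta>))"
    by (simp add: phi_sum phi_single Wm_add mult_monom)
  also have "\<dots> = phi a d p * phi a d q"
    by (simp add: phi_Wm sum_product)
  finally show ?thesis .
qed




lemma ideal_gen_zero: "0 \<in> ideal_gen S"
  unfolding ideal_gen_def by (rule CollectI, rule exI[of _ "{}"]) simp

lemma ideal_gen_add:
  assumes "p \<in> ideal_gen S" "q \<in> ideal_gen S" shows "p + q \<in> ideal_gen S"
proof -
  from assms obtain F c G e where F: "finite F" "F \<subseteq> S" "p = (\<Sum>h\<in>F. c h * h)"
    and G: "finite G" "G \<subseteq> S" "q = (\<Sum>h\<in>G. e h * h)"
    unfolding ideal_gen_def by blast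
  define c' where "c' h = (if h \<in> F then c h else 0) + (if h \<in> G then e h else 0)" for h
  have eq: "c' h * h = (if h \<in> F then c h * h else 0) + (if h \<in> G then e h * h else 0)" for h
    by (simp add: c'_def distrib_right)
  have "(\<Sum>h\<in>F\<union>G. c' h * h) = (\<Sum>h\<in>F\<union>G. (if h \<in> F then c h * h else 0))
      + (\<Sum>h\<in>F\<union>G. (if h \<in> G then e h * h else 0))"
    unfolding eq by (rule sum.distrib)
  also have "\<dots> = p + q"
  proof -
    have "(\<Sum>h\<in>F\<union>G. (if h \<in> F then c h * h else 0)) = (\<Sum>h\<in>F. c h * h)"
      using F G by (intro sum.mono_neutral_cong_right) auto
    moreover have "(\<Sum>h\<in>F\<union>G. (if h \<in> G then e h * h else 0)) = (\<Sum>h\<in>G. e h * h)"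
      using F G by (intro sum.mono_neutral_cong_right) auto
    ultimately show ?thesis using F G by simp
  qed
  finally have eqn: "p + q = (\<Sum>h\<in>F\<union>G. c' h * h)" by simp
  show ?thesis unfolding ideal_gen_def
    by (rule CollectI, rule exI[of _ "F \<union> G"], rule exI[of _ c']) (use F G eqn in auto)
qed

lemma ideal_gen_mult:
  assumes "p \<in> ideal_gen S" shows "r * p \<in> ideal_gen S"
proof -
  from assms obtain F c where F: "finite F" "F \<subseteq> S" "p = (\<Sum>h\<in>F. c h * h)"
    unfolding ideal_gen_def by blast
  then have "r * p = (\<Sum>h\<in>F. (r * c h) * h)" by (simp add: sum_distrib_left mult.assoc)
  then show ?thesis using F unfolding ideal_gen_def
    by (intro CollectI exI[of _ F] exI[of _ "\<lambda>h. r * c h"]) auto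
qed

lemma ideal_gen_uminus: "p \<in> ideal_gen S \<Longrightarrow> - p \<in> ideal_gen S"
  using ideal_gen_mult[of p S "-1"] by simp

lemma ideal_gen_diff: "p \<in> ideal_gen S \<Longrightarrow> q \<in> ideal_gen S \<Longrightarrow> p - q \<in> ideal_gen S"
  using ideal_gen_add[of p S "-q"] ideal_gen_uminus[of q S] by simp

lemma ideal_gen_base: "h \<in> S \<Longrightarrow> h \<in> ideal_gen S"
  unfolding ideal_gen_def by (rule CollectI, rule exI[of _ "{h}"], rule exI[of _ "\<lambda>_. 1"]) simp

lemma ideal_gen_mono: "T \<subseteq> S \<Longrightarrow> ideal_gen T \<subseteq> ideal_gen S"
  unfolding ideal_gen_def by blast

section \<open>Binomials\<close>

definition B :: "(var4 \<Rightarrow>\<^sub>0 nat) \<Rightarrow> (var4 \<Rightarrow>\<^sub>0 nat) \<Rightarrow> 'k::field mpoly4" where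
  "B u v = Poly_Mapping.single u 1 - Poly_Mapping.single v 1"

abbreviation R :: "'k::field mpoly4 set \<Rightarrow> (var4 \<Rightarrow>\<^sub>0 nat) \<Rightarrow> (var4 \<Rightarrow>\<^sub>0 nat) \<Rightarrow> bool" where
  "R S u v \<equiv> B u v \<in> ideal_gen S"

lemma R_refl: "R S u u"
  by (simp add: B_def ideal_gen_zero)

lemma R_sym: "R S u v \<Longrightarrow> R S v u"
  using ideal_gen_uminus[of "B u v" S] by (simp add: B_def)

lemma R_trans: "R S u v \<Longrightarrow> R S v w \<Longrightarrow> R S u w"
  using ideal_gen_add[of "B u v" S "B v w"] by (simp add: B_def)

lemma R_shift: "R S u v \<Longrightarrow> R S (u + r) (v + r)"
  using ideal_gen_mult[of "B u v" S "Poly_Mapping.single r 1"]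
  by (simp add: B_def right_diff_distrib mult_single add.commute)

lemma phi_B: "phi a d (B u v) = monom 1 (Wm a d u) - monom 1 (Wm a d v)"
  by (simp add: B_def phi_diff phi_single)

lemma phi_B_zero_iff: "phi a d (B u v) = 0 \<longleftrightarrow> Wm a d u = Wm a d v"
  by (simp add: phi_B monom_eq_iff')

lemma keys_B: "Poly_Mapping.keys (B u v) \<subseteq> {u, v}"
  by (auto simp: B_def in_keys_iff lookup_minus lookup_single when_def split: if_splits)

lemma lookup_B1: "u \<noteq> v \<Longrightarrow> Poly_Mapping.lookup (B u v) u = (1::'k::field)"
  by (simp add: B_def lookup_minus lookup_single)

lemma lookup_B2: "u \<noteq> v \<Longrightarrow> Poly_Mapping.lookup (B u v) v = (-1::'k::field)"
  by (simp add: B_def lookup_minus lookup_single)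

section \<open>Isolated monomials\<close>

lemma isolated:
  assumes iso: "\<And>g \<beta> r. g \<in> T \<Longrightarrow> \<beta> \<in> Poly_Mapping.keys g \<Longrightarrow> \<mu> \<noteq> \<beta> + r"
    and p: "p \<in> ideal_gen (T :: 'k::field mpoly4 set)"
  shows "Poly_Mapping.lookup p \<mu> = 0"
proof -
  from p obtain F c where F: "finite F" "F \<subseteq> T" "p = (\<Sum>h\<in>F. c h * h)"
    unfolding ideal_gen_def by blast
  have "Poly_Mapping.lookup (c h * h) \<mu> = 0" if "h \<in> T" for h
  proof -
    have "(\<Sum>q. (Poly_Mapping.lookup h q when \<mu> = l + q)) = 0" for l
    proof -
      have z: "(\<lambda>q. (Poly_Mapping.lookup h q when \<mu> = l + q)) = (\<lambda>q. 0)"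
      proof
        fix q
        show "(Poly_Mapping.lookup h q when \<mu> = l + q) = 0"
        proof (cases "q \<in> Poly_Mapping.keys h")
          case True
          then have "\<mu> \<noteq> q + l" using iso that by blast
          then show ?thesis by (simp add: add.commute)
        next
          case False then show ?thesis by (simp add: in_keys_iff)
        qed
      qed
      show ?thesis by (subst z) simp
    qed
    then show ?thesis by (simp add: lookup_mult)
  qed
  then show ?thesis using F by (simp add: lookup_sum subsetD)
qed

definition E :: "nat \<Rightarrow> nat \<Rightarrow> nat \<Rightarrow> nat \<Rightarrow> (var4 \<Rightarrow>\<^sub>0 nat)" where
  "E a b c d = Poly_Mapping.single V1 a + Poly_Mapping.single V2 b + Poly_Mapping.single V3 c + Poly_Mapping.single V4 d"

lemma lookup_E[simp]:
  "Poly_Mapping.lookup (E a b c d) V1 = a"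
  "Poly_Mapping.lookup (E a b c d) V2 = b"
  "Poly_Mapping.lookup (E a b c d) V3 = c"
  "Poly_Mapping.lookup (E a b c d) V4 = d"
  by (simp_all add: E_def lookup_add lookup_single)

lemma E_lookup: "\<alpha> = E (Poly_Mapping.lookup \<alpha> V1) (Poly_Mapping.lookup \<alpha> V2) (Poly_Mapping.lookup \<alpha> V3) (Poly_Mapping.lookup \<alpha> V4)"
proof (rule poly_mapping_eqI)
  fix v show "Poly_Mapping.lookup \<alpha> v = Poly_Mapping.lookup (E (Poly_Mapping.lookup \<alpha> V1) (Poly_Mapping.lookup \<alpha> V2) (Poly_Mapping.lookup \<alpha> V3) (Poly_Mapping.lookup \<alpha> V4)) v"
    by (cases v) simp_all
qed

lemma E_eq_iff[simp]: "E a b c d = E a' b' c' d' \<longleftrightarrow> a = a' \<and> b = b' \<and> c = c' \<and> d = d'"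
  by (metis lookup_E)

lemma E_zero[simp]: "E 0 0 0 0 = 0"
  by (simp add: E_def)

lemma E_add[simp]: "E a b c d + E a' b' c' d' = E (a+a') (b+b') (c+c') (d+d')"
  by (simp add: E_def single_add algebra_simps)

lemma E_dvd[simp]: "(\<exists>r. E a b c d = E a' b' c' d' + r) \<longleftrightarrow> a' \<le> a \<and> b' \<le> b \<and> c' \<le> c \<and> d' \<le> d"
proof
  assume "\<exists>r. E a b c d = E a' b' c' d' + r"
  then obtain r where r: "E a b c d = E a' b' c' d' + r" by blast
  show "a' \<le> a \<and> b' \<le> b \<and> c' \<le> c \<and> d' \<le> d"
    using arg_cong[OF r, of "\<lambda>x. Poly_Mapping.lookup x V1"] arg_cong[OF r, of "\<lambda>x. Poly_Mapping.lookup x V2"]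
      arg_cong[OF r, of "\<lambda>x. Poly_Mapping.lookup x V3"] arg_cong[OF r, of "\<lambda>x. Poly_Mapping.lookup x V4"]
    by (simp add: lookup_add)
next
  assume "a' \<le> a \<and> b' \<le> b \<and> c' \<le> c \<and> d' \<le> d"
  then have "E a b c d = E a' b' c' d' + E (a-a') (b-b') (c-c') (d-d')" by simp
  then show "\<exists>r. E a b c d = E a' b' c' d' + r" by blast
qed

lemma Wm_E: "Wm a d (E e1 e2 e3 e4) = e1 * a + e2 * (2*a+d) + e3 * (3*a+3*d) + e4 * (4*a+6*d)"
  by (simp add: Wm_explicit)

lemma R_E_shift:
  assumes "R S (E a1 b1 c1 d1) (E a2 b2 c2 d2)"
    "a1 \<le> z1" "b1 \<le> z2" "c1 \<le> z3" "d1 \<le> z4"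
  shows "R S (E z1 z2 z3 z4) (E (z1 - a1 + a2) (z2 - b1 + b2) (z3 - c1 + c2) (z4 - d1 + d2))"
proof -
  have 1: "E z1 z2 z3 z4 = E a1 b1 c1 d1 + E (z1-a1) (z2-b1) (z3-c1) (z4-d1)" using assms by simp
  have 2: "E (z1 - a1 + a2) (z2 - b1 + b2) (z3 - c1 + c2) (z4 - d1 + d2) = E a2 b2 c2 d2 + E (z1-a1) (z2-b1) (z3-c1) (z4-d1)" by simp
  show ?thesis unfolding 1 2 by (rule R_shift[OF assms(1)])
qed

lemma xv_E:
  "x1 = Poly_Mapping.single (E 1 0 0 0) 1" "x2 = Poly_Mapping.single (E 0 1 0 0) 1"
  "x3 = Poly_Mapping.single (E 0 0 1 0) 1" "x4 = Poly_Mapping.single (E 0 0 0 1) 1"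
  by (simp_all add: xv_def E_def)

lemma single_E_pow[simp]: "(Poly_Mapping.single (E a b c d) (1::'k::field)) ^ n = Poly_Mapping.single (E (n*a) (n*b) (n*c) (n*d)) 1"
  by (induction n) (simp_all add: mult_single)

lemma single_E_mult[simp]: "Poly_Mapping.single (E a b c d) (1::'k::field) * Poly_Mapping.single (E a' b' c' d') 1 = Poly_Mapping.single (E (a+a') (b+b') (c+c') (d+d')) 1"
  by (simp add: mult_single)




definition Et :: "nat \<times> nat \<times> nat \<times> nat \<Rightarrow> (var4 \<Rightarrow>\<^sub>0 nat)" where
  "Et x = (case x of (a,b,c,d) \<Rightarrow> E a b c d)"
definition nn :: "nat \<times> nat \<times> nat \<times> nat \<Rightarrow> nat" where
  "nn x = (case x of (a,b,c,d) \<Rightarrow> b + 3*c + 6*d)"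
definition le4 :: "nat \<times> nat \<times> nat \<times> nat \<Rightarrow> nat \<times> nat \<times> nat \<times> nat \<Rightarrow> bool" where
  "le4 x y = (case x of (a,b,c,d) \<Rightarrow> case y of (a',b',c',d') \<Rightarrow> a \<le> a' \<and> b \<le> b' \<and> c \<le> c' \<and> d \<le> d')"
definition BP :: "(nat \<times> nat \<times> nat \<times> nat) \<times> (nat \<times> nat \<times> nat \<times> nat) \<Rightarrow> 'k::field mpoly4" where
  "BP x = (case x of (u,v) \<Rightarrow> B (Et u) (Et v))"

lemma Et_simp[simp]: "Et (a,b,c,d) = E a b c d" by (simp add: Et_def)
lemma nn_simp[simp]: "nn (a,b,c,d) = b + 3*c + 6*d" by (simp add: nn_def)
lemma le4_simp[simp]: "le4 (a,b,c,d) (a',b',c',d') \<longleftrightarrow> a \<le> a' \<and> b \<le> b' \<and> c \<le> c' \<and> d \<le> d'"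
  by (simp add: le4_def)
lemma BP_simp[simp]: "BP (u,v) = B (Et u) (Et v)" by (simp add: BP_def)

lemma Et_inj: "Et x = Et y \<longleftrightarrow> x = y"
  by (cases x; cases y) simp

lemma Et_dvd: "(\<exists>r. Et x = Et y + r) \<longleftrightarrow> le4 y x"
  by (cases x; cases y) (simp only: Et_simp E_dvd le4_simp)

section \<open>Reduction\<close>

lemma reduce_basic:
  assumes b1: "R S (E 0 0 2 0) (E 2 0 0 1)" and b2: "R S (E 0 3 0 0) (E 3 0 1 0)"
  shows "\<forall>e1 e2 e3 e4. e2 + e3 = k \<longrightarrow> (\<exists>f1 f2 f3 f4. R S (E e1 e2 e3 e4) (E f1 f2 f3 f4) \<and> f2 \<le> 2 \<and> f3 \<le> 1
      \<and> f2+3*f3+6*f4 = e2+3*e3+6*e4)"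
proof (induction k rule: less_induct)
  case (less k)
  show ?case
  proof (intro allI impI)
    fix e1 e2 e3 e4 assume k: "e2 + e3 = k"
    show "\<exists>f1 f2 f3 f4. R S (E e1 e2 e3 e4) (E f1 f2 f3 f4) \<and> f2 \<le> 2 \<and> f3 \<le> 1
      \<and> f2+3*f3+6*f4 = e2+3*e3+6*e4"
    proof (cases "3 \<le> e2")
      case True
      have st: "R S (E e1 e2 e3 e4) (E (e1+3) (e2-3) (e3+1) e4)"
        using R_E_shift[OF b2, of e1 e2 e3 e4] True by simp
      have lt: "(e2-3)+(e3+1) < k" using True k by simp
      obtain f1 f2 f3 f4 where f: "R S (E (e1+3) (e2-3) (e3+1) e4) (E f1 f2 f3 f4)" "f2 \<le> 2" "f3 \<le> 1"
        "f2+3*f3+6*f4 = (e2-3)+3*(e3+1)+6*e4"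
        using spec[OF spec[OF spec[OF spec[OF less[OF lt], of "e1+3"], of "e2-3"], of "e3+1"], of e4] by blast
      show ?thesis using R_trans[OF st f(1)] f(2-4) True by (intro exI[of _ f1] exI[of _ f2] exI[of _ f3] exI[of _ f4]) auto
    next
      case False
      show ?thesis
      proof (cases "2 \<le> e3")
        case True
        have st: "R S (E e1 e2 e3 e4) (E (e1+2) e2 (e3-2) (e4+1))"
          using R_E_shift[OF b1, of e1 e2 e3 e4] True by simp
        have lt: "e2+(e3-2) < k" using True k by simp
        obtain f1 f2 f3 f4 where f: "R S (E (e1+2) e2 (e3-2) (e4+1)) (E f1 f2 f3 f4)" "f2 \<le> 2" "f3 \<le> 1"
          "f2+3*f3+6*f4 = e2+3*(e3-2)+6*(e4+1)"
          using spec[OF spec[OF spec[OF spec[OF less[OF lt], of "e1+2"], of e2], of "e3-2"], of "e4+1"] by blast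
        show ?thesis using R_trans[OF st f(1)] f(2-4) True by (intro exI[of _ f1] exI[of _ f2] exI[of _ f3] exI[of _ f4]) auto
      next
        case False
        then show ?thesis using \<open>\<not> 3 \<le> e2\<close> R_refl by (intro exI[of _ e1] exI[of _ e2] exI[of _ e3] exI[of _ e4]) auto
      qed
    qed
  qed
qed

lemma reduce_full:
  assumes b1: "R S (E 0 0 2 0) (E 2 0 0 1)" and b2: "R S (E 0 3 0 0) (E 3 0 1 0)"
    and step: "\<And>f1 f2 f3 f4. f2 \<le> 2 \<Longrightarrow> f3 \<le> 1 \<Longrightarrow> a \<le> f2+3*f3+6*f4 \<Longrightarrow>
       \<exists>g1 g2 g3 g4. R S (E f1 f2 f3 f4) (E g1 g2 g3 g4) \<and> g2+3*g3+6*g4 < f2+3*f3+6*f4"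
  shows "\<forall>e1 e2 e3 e4. e2+3*e3+6*e4 = k \<longrightarrow> (\<exists>f1 f2 f3 f4. R S (E e1 e2 e3 e4) (E f1 f2 f3 f4) \<and> f2 \<le> 2 \<and> f3 \<le> 1
      \<and> f2+3*f3+6*f4 < a)"
proof (induction k rule: less_induct)
  case (less k)
  show ?case
  proof (intro allI impI)
    fix e1 e2 e3 e4 assume k: "e2+3*e3+6*e4 = k"
    obtain f1 f2 f3 f4 where f: "R S (E e1 e2 e3 e4) (E f1 f2 f3 f4)" "f2 \<le> 2" "f3 \<le> 1"
      "f2+3*f3+6*f4 = e2+3*e3+6*e4"
      using reduce_basic[OF b1 b2, of "e2+e3"] by blast
    show "\<exists>f1 f2 f3 f4. R S (E e1 e2 e3 e4) (E f1 f2 f3 f4) \<and> f2 \<le> 2 \<and> f3 \<le> 1 \<and> f2+3*f3+6*f4 < a"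
    proof (cases "a \<le> f2+3*f3+6*f4")
      case False then show ?thesis using f
        by (intro exI[of _ f1] exI[of _ f2] exI[of _ f3] exI[of _ f4]) auto
    next
      case True
      obtain g1 g2 g3 g4 where g: "R S (E f1 f2 f3 f4) (E g1 g2 g3 g4)" "g2+3*g3+6*g4 < f2+3*f3+6*f4"
        using step[OF f(2,3) True] by blast
      obtain h1 h2 h3 h4 where h: "R S (E g1 g2 g3 g4) (E h1 h2 h3 h4)" "h2 \<le> 2" "h3 \<le> 1" "h2+3*h3+6*h4 < a"
        using spec[OF spec[OF spec[OF spec[OF less[of "g2+3*g3+6*g4"], of g1], of g2], of g3], of g4] g(2) f(4) k by auto
      show ?thesis using R_trans[OF R_trans[OF f(1) g(1)] h(1)] h(2-4) by blast
    qed
  qed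
qed

lemma step_from_pairs:
  assumes S: "S = BP ` P"
    and st: "\<forall>f1 f2 f3 f4. f2 \<le> 2 \<longrightarrow> f3 \<le> 1 \<longrightarrow> a \<le> f2+3*f3+6*f4 \<longrightarrow> (\<exists>(u,v)\<in>P. le4 v (f1,f2,f3,f4) \<and> nn u < nn v)"
    and f: "f2 \<le> 2" "f3 \<le> 1" "a \<le> f2+3*f3+6*f4"
  shows "\<exists>g1 g2 g3 g4. R S (E f1 f2 f3 f4) (E g1 g2 g3 g4) \<and> g2+3*g3+6*g4 < f2+3*f3+6*f4"
proof -
  obtain u1 u2 u3 u4 v1 v2 v3 v4 where P: "((u1,u2,u3,u4),(v1,v2,v3,v4)) \<in> P"
    and le: "v1 \<le> f1" "v2 \<le> f2" "v3 \<le> f3" "v4 \<le> f4" and n: "u2+3*u3+6*u4 < v2+3*v3+6*v4"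
    using st[rule_format, OF f] by fastforce
  have "R S (E u1 u2 u3 u4) (E v1 v2 v3 v4)"
    using P S by (intro ideal_gen_base) force
  then have "R S (E v1 v2 v3 v4) (E u1 u2 u3 u4)" by (rule R_sym)
  from R_E_shift[OF this le] n le show ?thesis
    by (intro exI[of _ "f1 - v1 + u1"] exI[of _ "f2 - v2 + u2"] exI[of _ "f3 - v3 + u3"] exI[of _ "f4 - v4 + u4"] conjI) auto
qed

lemma ideal_in_kernel:
  assumes "\<forall>h\<in>S. phi a d h = 0"
  shows "ideal_gen S \<subseteq> kernel_p4 a d"
proof
  fix p assume "p \<in> ideal_gen S"
  then obtain F c where F: "finite F" "F \<subseteq> S" "p = (\<Sum>h\<in>F. c h * h)"
    unfolding ideal_gen_def by blast
  have "phi a d p = (\<Sum>h\<in>F. phi a d (c h) * phi a d h)"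
    using F by (simp add: phi_sum phi_mult)
  also have "\<dots> = 0" using F assms by (intro sum.neutral) auto
  finally show "p \<in> kernel_p4 a d" by (simp add: kernel_p4_def)
qed

lemma coeff_phi: "coeff (phi a d p) n = (\<Sum>\<beta>\<in>Poly_Mapping.keys p. if Wm a d \<beta> = n then Poly_Mapping.lookup p \<beta> else 0)"
  by (simp add: phi_Wm coeff_sum coeff_monom)

lemma kernel_in_ideal:
  assumes conn: "\<And>\<alpha> \<beta>. Wm a d \<alpha> = Wm a d \<beta> \<Longrightarrow> R S \<alpha> \<beta>"
  shows "\<forall>p. card (Poly_Mapping.keys p) = k \<longrightarrow> phi a d p = 0 \<longrightarrow> p \<in> ideal_gen S"
proof (induction k rule: less_induct)
  case (less k)
  show ?case
  proof (intro allI impI)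
    fix p :: "'a mpoly4" assume k: "card (Poly_Mapping.keys p) = k" and ph: "phi a d p = 0"
    show "p \<in> ideal_gen S"
    proof (cases "p = 0")
      case True then show ?thesis by (simp add: ideal_gen_zero)
    next
      case False
      then obtain \<alpha> where al: "\<alpha> \<in> Poly_Mapping.keys p"
        by (metis all_not_in_conv keys_eq_empty)
      define c where "c = Poly_Mapping.lookup p \<alpha>"
      have c0: "c \<noteq> 0" using al by (simp add: c_def in_keys_iff)
      have "\<exists>\<beta>\<in>Poly_Mapping.keys p. \<beta> \<noteq> \<alpha> \<and> Wm a d \<beta> = Wm a d \<alpha>"
      proof (rule ccontr)
        assume nb: "\<not> ?thesis"
        have "coeff (phi a d p) (Wm a d \<alpha>) = (\<Sum>\<beta>\<in>Poly_Mapping.keys p. if \<beta> = \<alpha> then Poly_Mapping.lookup p \<beta> else 0)"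
          unfolding coeff_phi using nb by (intro sum.cong) auto
        also have "\<dots> = c" using al by (simp add: c_def)
        finally show False using ph c0 by simp
      qed
      then obtain \<beta> where be: "\<beta> \<in> Poly_Mapping.keys p" "\<beta> \<noteq> \<alpha>" "Wm a d \<beta> = Wm a d \<alpha>" by blast
      define p' where "p' = p - (Poly_Mapping.single \<alpha> c - Poly_Mapping.single \<beta> c)"
      have lk: "Poly_Mapping.lookup p' \<gamma> = Poly_Mapping.lookup p \<gamma> - (if \<gamma> = \<alpha> then c else 0) + (if \<gamma> = \<beta> then c else 0)" for \<gamma>
        by (auto simp: p'_def lookup_minus lookup_single when_def)
      have sub: "Poly_Mapping.keys p' \<subseteq> Poly_Mapping.keys p - {\<alpha>}"
      proof
        fix \<gamma> assume "\<gamma> \<in> Poly_Mapping.keys p'"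
        then have "Poly_Mapping.lookup p' \<gamma> \<noteq> 0" by (simp add: in_keys_iff)
        then show "\<gamma> \<in> Poly_Mapping.keys p - {\<alpha>}"
          using be al unfolding lk by (auto simp: c_def in_keys_iff split: if_splits)
      qed
      have c1: "card (Poly_Mapping.keys p') \<le> card (Poly_Mapping.keys p - {\<alpha>})"
        by (rule card_mono) (simp_all add: sub)
      have c2: "card (Poly_Mapping.keys p - {\<alpha>}) < card (Poly_Mapping.keys p)"
        by (rule card_Diff1_less) (simp_all add: al)
      have "card (Poly_Mapping.keys p') < k"
        using c1 c2 k by linarith
      moreover have "phi a d p' = 0"
        using ph be by (simp add: p'_def phi_diff phi_single)
      ultimately have p': "p' \<in> ideal_gen S" using less by blast
      have "Poly_Mapping.single \<alpha> c - Poly_Mapping.single \<beta> c = Poly_Mapping.single 0 c * B \<alpha> \<beta>"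
        by (simp add: B_def right_diff_distrib mult_single)
      then have "Poly_Mapping.single \<alpha> c - Poly_Mapping.single \<beta> c \<in> ideal_gen S"
        using ideal_gen_mult[OF conn[OF be(3)[symmetric]]] by simp
      from ideal_gen_add[OF p' this] show ?thesis by (simp add: p'_def)
    qed
  qed
qed

section \<open>Normal forms are unique\<close>

lemma dig1: "(x::nat) \<le> 2 \<Longrightarrow> y \<le> 1 \<Longrightarrow> (x + 3*y + 6*z) mod 3 = x"
  by presburger
lemma dig2: "(x::nat) \<le> 2 \<Longrightarrow> y \<le> 1 \<Longrightarrow> ((x + 3*y + 6*z) div 3) mod 2 = y"
  by presburger
lemma dig3: "(x::nat) \<le> 2 \<Longrightarrow> y \<le> 1 \<Longrightarrow> (x + 3*y + 6*z) div 6 = z"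
  by presburger

lemma nf_unique:
  assumes cop: "coprime a d" and a0: "0 < a" and f: "f2 \<le> 2" "f3 \<le> 1" "f2+3*f3+6*f4 < a"
    and g: "g2 \<le> 2" "g3 \<le> 1" "g2+3*g3+6*g4 < a"
    and W: "Wm a d (E f1 f2 f3 f4) = Wm a d (E g1 g2 g3 g4)"
  shows "E f1 f2 f3 f4 = E g1 g2 g3 g4"
proof -
  define X where "X = f1 + 2*f2 + 3*f3 + 4*f4"
  define Y where "Y = g1 + 2*g2 + 3*g3 + 4*g4"
  define nf where "nf = f2+3*f3+6*f4"
  define ng where "ng = g2+3*g3+6*g4"
  have eq: "a*X + d*nf = a*Y + d*ng"
    using W unfolding Wm_E X_def Y_def nf_def ng_def by (simp add: algebra_simps)
  have "int a * (int X - int Y) = int d * (int ng - int nf)"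
    using arg_cong[OF eq, of int] by (simp add: algebra_simps)
  then have "int a dvd int d * (int ng - int nf)" by (metis dvd_triv_left)
  moreover have "coprime (int a) (int d)" using cop by simp
  ultimately have dv: "int a dvd (int ng - int nf)"
    using coprime_dvd_mult_right_iff by blast
  have nfng: "nf = ng"
  proof (rule ccontr)
    assume "nf \<noteq> ng"
    from dv obtain q where q: "int ng - int nf = int a * q" by (auto elim: dvdE)
    with \<open>nf \<noteq> ng\<close> have "q \<noteq> 0" by auto
    then have "\<bar>int a * q\<bar> \<ge> int a" using a0 by (simp add: abs_mult mult_le_cancel_left1)
    moreover have "\<bar>int ng - int nf\<bar> < int a" using f(3) g(3) unfolding nf_def ng_def by linarith
    ultimately show False using q by simp
  qed
  have m1: "nf mod 3 = f2" "ng mod 3 = g2" using dig1 f(1,2) g(1,2) unfolding nf_def ng_def by blast+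
  have m2: "(nf div 3) mod 2 = f3" "(ng div 3) mod 2 = g3" using dig2 f(1,2) g(1,2) unfolding nf_def ng_def by blast+
  have m3: "nf div 6 = f4" "ng div 6 = g4" using dig3 f(1,2) g(1,2) unfolding nf_def ng_def by blast+
  have "f2 = g2 \<and> f3 = g3 \<and> f4 = g4" using m1 m2 m3 nfng by metis
  moreover have "X = Y" using eq nfng a0 by simp
  ultimately show ?thesis unfolding X_def Y_def by simp
qed




lemma generic:
  fixes P :: "((nat\<times>nat\<times>nat\<times>nat)\<times>(nat\<times>nat\<times>nat\<times>nat)) set" and S :: "'k::field mpoly4 set"
  assumes S: "S = BP ` P"
    and bal: "\<forall>(u,v)\<in>P. Wm a d (Et u) = Wm a d (Et v)"
    and base: "((0,0,2,0),(2,0,0,1)) \<in> P" "((0,3,0,0),(3,0,1,0)) \<in> P"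
    and st: "\<forall>f1 f2 f3 f4. f2 \<le> 2 \<longrightarrow> f3 \<le> 1 \<longrightarrow> a \<le> f2+3*f3+6*f4 \<longrightarrow> (\<exists>(u,v)\<in>P. le4 v (f1,f2,f3,f4) \<and> nn u < nn v)"
    and iso: "\<forall>(u,v)\<in>P. u \<noteq> v \<and> ((\<forall>(u',v')\<in>P. (u',v') \<noteq> (u,v) \<longrightarrow> \<not> le4 u' u \<and> \<not> le4 v' u)
                 \<or> (\<forall>(u',v')\<in>P. (u',v') \<noteq> (u,v) \<longrightarrow> \<not> le4 u' v \<and> \<not> le4 v' v))"
    and cop: "coprime a d" and a0: "0 < a"
  shows "minimally_generates S (kernel_p4 a d)"
proof -
  have Sker: "\<forall>h\<in>S. phi a d h = 0" using S bal by (auto simp: phi_B_zero_iff)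
  have sub1: "ideal_gen S \<subseteq> kernel_p4 a d" by (rule ideal_in_kernel[OF Sker])
  have b1: "R S (E 0 0 2 0) (E 2 0 0 1)" using base(1) S by (intro ideal_gen_base) force
  have b2: "R S (E 0 3 0 0) (E 3 0 1 0)" using base(2) S by (intro ideal_gen_base) force
  have red: "\<exists>f1 f2 f3 f4. R S (E e1 e2 e3 e4) (E f1 f2 f3 f4) \<and> f2 \<le> 2 \<and> f3 \<le> 1 \<and> f2+3*f3+6*f4 < a"
    for e1 e2 e3 e4
  proof -
    have stp: "\<exists>g1 g2 g3 g4. R S (E f1 f2 f3 f4) (E g1 g2 g3 g4) \<and> g2+3*g3+6*g4 < f2+3*f3+6*f4"
      if "f2 \<le> 2" "f3 \<le> 1" "a \<le> f2+3*f3+6*f4" for f1 f2 f3 f4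
      using step_from_pairs[OF S st that] .
    show ?thesis using reduce_full[OF b1 b2 stp] by blast
  qed
  have redW: "\<exists>f1 f2 f3 f4. R S \<alpha> (E f1 f2 f3 f4) \<and> f2 \<le> 2 \<and> f3 \<le> 1 \<and> f2+3*f3+6*f4 < a
      \<and> Wm a d (E f1 f2 f3 f4) = Wm a d \<alpha>" for \<alpha>
  proof -
    obtain f1 f2 f3 f4 where f: "R S \<alpha> (E f1 f2 f3 f4)" "f2 \<le> 2" "f3 \<le> 1" "f2+3*f3+6*f4 < a"
      using red[of "Poly_Mapping.lookup \<alpha> V1" "Poly_Mapping.lookup \<alpha> V2" "Poly_Mapping.lookup \<alpha> V3" "Poly_Mapping.lookup \<alpha> V4"]
      by (auto simp flip: E_lookup)
    have "phi a d (B \<alpha> (E f1 f2 f3 f4) :: 'k mpoly4) = 0" using subsetD[OF sub1 f(1)] by (simp add: kernel_p4_def)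
    then have "Wm a d (E f1 f2 f3 f4) = Wm a d \<alpha>" by (simp add: phi_B_zero_iff)
    then show ?thesis using f by blast
  qed
  have conn: "R S \<alpha> \<beta>" if W: "Wm a d \<alpha> = Wm a d \<beta>" for \<alpha> \<beta>
  proof -
    obtain f1 f2 f3 f4 where f: "R S \<alpha> (E f1 f2 f3 f4)" "f2 \<le> 2" "f3 \<le> 1" "f2+3*f3+6*f4 < a"
      "Wm a d (E f1 f2 f3 f4) = Wm a d \<alpha>" using redW by blast
    obtain g1 g2 g3 g4 where g: "R S \<beta> (E g1 g2 g3 g4)" "g2 \<le> 2" "g3 \<le> 1" "g2+3*g3+6*g4 < a"
      "Wm a d (E g1 g2 g3 g4) = Wm a d \<beta>" using redW by blast
    have "E f1 f2 f3 f4 = E g1 g2 g3 g4"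
      by (rule nf_unique[OF cop a0 f(2-4) g(2-4)]) (simp add: f(5) g(5) W)
    then have "R S (E f1 f2 f3 f4) \<beta>" using R_sym[OF g(1)] by simp
    then show ?thesis using R_trans[OF f(1)] by blast
  qed
  have sub2: "kernel_p4 a d \<subseteq> ideal_gen S"
    using kernel_in_ideal[OF conn] by (auto simp: kernel_p4_def)
  have eq: "ideal_gen S = kernel_p4 a d" using sub1 sub2 by blast
  have minim: "ideal_gen T \<noteq> kernel_p4 a d" if T: "T \<subset> S" for T
  proof
    assume TI: "ideal_gen T = kernel_p4 a d"
    obtain h where h: "h \<in> S" "h \<notin> T" using T by blast
    obtain u v where uv: "(u,v) \<in> P" "h = BP (u,v)" using h(1) S by auto
    have "h \<in> kernel_p4 a d" using Sker h(1) by (simp add: kernel_p4_def)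
    then have hT: "h \<in> ideal_gen (S - {h})"
      using TI ideal_gen_mono[of T "S - {h}"] T h by auto
    have iu: "u \<noteq> v \<and> ((\<forall>(u',v')\<in>P. (u',v') \<noteq> (u,v) \<longrightarrow> \<not> le4 u' u \<and> \<not> le4 v' u)
                 \<or> (\<forall>(u',v')\<in>P. (u',v') \<noteq> (u,v) \<longrightarrow> \<not> le4 u' v \<and> \<not> le4 v' v))"
      using bspec[OF iso uv(1)] by simp
    then have neq: "u \<noteq> v" by blast
    from iu obtain x where x: "x = u \<or> x = v"
      and xi: "\<forall>(u',v')\<in>P. (u',v') \<noteq> (u,v) \<longrightarrow> \<not> le4 u' x \<and> \<not> le4 v' x"
      by blast
    have "Poly_Mapping.lookup h (Et x) = 0"
    proof (rule isolated[OF _ hT])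
      fix g \<beta> r assume g: "g \<in> S - {h}" and be: "\<beta> \<in> Poly_Mapping.keys g"
      obtain u' v' where uv': "(u',v') \<in> P" "g = BP (u',v')" using g S by auto
      have ne: "(u',v') \<noteq> (u,v)" using uv uv' g by auto
      have "\<beta> = Et u' \<or> \<beta> = Et v'" using be keys_B uv'(2) by (auto simp: BP_simp)
      moreover have "\<not> le4 u' x" "\<not> le4 v' x" using xi uv'(1) ne by auto
      ultimately show "Et x \<noteq> \<beta> + r" using Et_dvd by blast
    qed
    moreover have "Poly_Mapping.lookup h (Et x) \<noteq> 0"
      using x neq uv(2) by (auto simp: lookup_B1 lookup_B2 Et_inj)
    ultimately show False by simp
  qed
  show ?thesis unfolding minimally_generates_def using eq minim by blast
qed




lemma nat_int_eq: "int x = int y \<Longrightarrow> x = y" by simp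

lemma ins_cong: "x = y \<Longrightarrow> XX = YY \<Longrightarrow> insert x XX = insert y YY" by simp

lemma B_cong: "a = a' \<Longrightarrow> b = b' \<Longrightarrow> c = c' \<Longrightarrow> d = d' \<Longrightarrow> e = e' \<Longrightarrow> f = f' \<Longrightarrow> g = g' \<Longrightarrow> h = h' \<Longrightarrow>
  Poly_Mapping.single (E a b c d) (1::'k::field) - Poly_Mapping.single (E e f g h) 1 = Poly_Mapping.single (E a' b' c' d') 1 - Poly_Mapping.single (E e' f' g' h') 1"
  by simp
lemma case0:
  assumes amod: "a mod 6 = 0" and cop: "coprime a d" and a7: "a \<ge> 7" and d0: "d > 0"
  shows "minimally_generates (Hset a d :: 'k::field mpoly4 set) (kernel_p4 a d)"
proof -
  define m where "m = a div 6"
  have am: "a = 6*m + 0" using amod m_def div_mult_mod_eq[of a 6] by linarith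
  have ia: "int a = 6 * int m + 0" using am by simp
  have m1: "m \<ge> 1" using a7 am by simp
  let ?P = "{((0,0,2,0),(2,0,0,1)), ((0,3,0,0),(3,0,1,0)), ((4*m+d,0,0,0),(0,0,0,m))}"
  have S: "(Hset a d :: 'k mpoly4 set) = BP ` ?P"
    unfolding Hset_def Let_def  using amod by (simp add: m_def[symmetric]  xv_E B_def; (intro ins_cong B_cong)?; simp)
  show ?thesis
  proof (rule generic[OF S])
    show "\<forall>(u,v)\<in>?P. Wm a d (Et u) = Wm a d (Et v)"
      by (simp add: Wm_E; ((intro conjI)?; rule nat_int_eq; simp add: ia   algebra_simps))
    show "((0,0,2,0),(2,0,0,1)) \<in> ?P" "((0,3,0,0),(3,0,1,0)) \<in> ?P" by simp_all
    show "\<forall>f1 f2 f3 f4. f2 \<le> 2 \<longrightarrow> f3 \<le> 1 \<longrightarrow> a \<le> f2+3*f3+6*f4 \<longrightarrow> (\<exists>(u,v)\<in>?P. le4 v (f1,f2,f3,f4) \<and> nn u < nn v)"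
      using am m1  by auto
    show "\<forall>(u,v)\<in>?P. u \<noteq> v \<and> ((\<forall>(u',v')\<in>?P. (u',v') \<noteq> (u,v) \<longrightarrow> \<not> le4 u' u \<and> \<not> le4 v' u)
                 \<or> (\<forall>(u',v')\<in>?P. (u',v') \<noteq> (u,v) \<longrightarrow> \<not> le4 u' v \<and> \<not> le4 v' v))"
      using m1  by auto
    show "coprime a d" by (rule cop)
    show "0 < a" using a7 by simp
  qed
qed

lemma case1s:
  assumes amod: "a mod 6 = 1" and cop: "coprime a d" and a7: "a \<ge> 7" and d0: "d > 0" and sp: "a div 6 = 1 \<and> d = 1"
  shows "minimally_generates (Hset a d :: 'k::field mpoly4 set) (kernel_p4 a d)"
proof -
  define m where "m = a div 6"
  have am: "a = 6*m + 1" using amod m_def div_mult_mod_eq[of a 6] by linarith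
  have ia: "int a = 6 * int m + 1" using am by simp
  have m1: "m \<ge> 1" using a7 am by simp
  have mm: "m = 1" "d = 1" using sp m_def by auto
  let ?P = "{((0,0,2,0),(2,0,0,1)), ((0,3,0,0),(3,0,1,0)), ((7,0,0,0),(0,1,0,1)), ((4,2,0,0),(0,0,1,1)), ((2,2,1,0),(0,0,0,2))}"
  have S: "(Hset a d :: 'k mpoly4 set) = BP ` ?P"
    unfolding Hset_def Let_def if_P[OF sp] using amod by (simp add: m_def[symmetric]  mm xv_E B_def; (intro ins_cong B_cong)?; simp)
  show ?thesis
  proof (rule generic[OF S])
    show "\<forall>(u,v)\<in>?P. Wm a d (Et u) = Wm a d (Et v)"
      by (simp add: Wm_E; ((intro conjI)?; rule nat_int_eq; simp add: ia  mm algebra_simps))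
    show "((0,0,2,0),(2,0,0,1)) \<in> ?P" "((0,3,0,0),(3,0,1,0)) \<in> ?P" by simp_all
    show "\<forall>f1 f2 f3 f4. f2 \<le> 2 \<longrightarrow> f3 \<le> 1 \<longrightarrow> a \<le> f2+3*f3+6*f4 \<longrightarrow> (\<exists>(u,v)\<in>?P. le4 v (f1,f2,f3,f4) \<and> nn u < nn v)"
      using am m1 mm by auto
    show "\<forall>(u,v)\<in>?P. u \<noteq> v \<and> ((\<forall>(u',v')\<in>?P. (u',v') \<noteq> (u,v) \<longrightarrow> \<not> le4 u' u \<and> \<not> le4 v' u)
                 \<or> (\<forall>(u',v')\<in>?P. (u',v') \<noteq> (u,v) \<longrightarrow> \<not> le4 u' v \<and> \<not> le4 v' v))"
      using m1 mm by auto
    show "coprime a d" by (rule cop)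
    show "0 < a" using a7 by simp
  qed
qed

lemma case1:
  assumes amod: "a mod 6 = 1" and cop: "coprime a d" and a7: "a \<ge> 7" and d0: "d > 0" and sp: "\<not> (a div 6 = 1 \<and> d = 1)"
  shows "minimally_generates (Hset a d :: 'k::field mpoly4 set) (kernel_p4 a d)"
proof -
  define m where "m = a div 6"
  have am: "a = 6*m + 1" using amod m_def div_mult_mod_eq[of a 6] by linarith
  have ia: "int a = 6 * int m + 1" using am by simp
  have m1: "m \<ge> 1" using a7 am by simp
  have K6: "4*m+d \<ge> 6" using sp m1 d0 m_def by auto
  have spm: "(m = 1 \<and> d = 1) = False" using sp m_def by auto
  define K where "K = 4*m+d-6"
  have Keq: "4*m+d = K+6" using K6 K_def by simp
  have iK: "int K = 4 * int m + int d - 6" using Keq by simp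
  let ?P = "{((0,0,2,0),(2,0,0,1)), ((0,3,0,0),(3,0,1,0)), ((K,5,0,0),(0,0,0,m+1)), ((K+5,2,0,0),(0,0,1,m)), ((K+8,0,0,0),(0,1,0,m))}"
  have S: "(Hset a d :: 'k mpoly4 set) = BP ` ?P"
    unfolding Hset_def Let_def if_not_P[OF sp] using amod by (simp add: m_def[symmetric] Keq spm xv_E B_def; (intro ins_cong B_cong)?; simp)
  show ?thesis
  proof (rule generic[OF S])
    show "\<forall>(u,v)\<in>?P. Wm a d (Et u) = Wm a d (Et v)"
      by (simp add: Wm_E; ((intro conjI)?; rule nat_int_eq; simp add: ia iK  algebra_simps))
    show "((0,0,2,0),(2,0,0,1)) \<in> ?P" "((0,3,0,0),(3,0,1,0)) \<in> ?P" by simp_all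
    show "\<forall>f1 f2 f3 f4. f2 \<le> 2 \<longrightarrow> f3 \<le> 1 \<longrightarrow> a \<le> f2+3*f3+6*f4 \<longrightarrow> (\<exists>(u,v)\<in>?P. le4 v (f1,f2,f3,f4) \<and> nn u < nn v)"
      using am m1  by auto
    show "\<forall>(u,v)\<in>?P. u \<noteq> v \<and> ((\<forall>(u',v')\<in>?P. (u',v') \<noteq> (u,v) \<longrightarrow> \<not> le4 u' u \<and> \<not> le4 v' u)
                 \<or> (\<forall>(u',v')\<in>?P. (u',v') \<noteq> (u,v) \<longrightarrow> \<not> le4 u' v \<and> \<not> le4 v' v))"
      using m1  by auto
    show "coprime a d" by (rule cop)
    show "0 < a" using a7 by simp
  qed
qed

lemma case2:
  assumes amod: "a mod 6 = 2" and cop: "coprime a d" and a7: "a \<ge> 7" and d0: "d > 0"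
  shows "minimally_generates (Hset a d :: 'k::field mpoly4 set) (kernel_p4 a d)"
proof -
  define m where "m = a div 6"
  have am: "a = 6*m + 2" using amod m_def div_mult_mod_eq[of a 6] by linarith
  have ia: "int a = 6 * int m + 2" using am by simp
  have m1: "m \<ge> 1" using a7 am by simp
  have K6: "4*m+d \<ge> 4" using m1 d0 by simp
  define K where "K = 4*m+d-4"
  have Keq: "4*m+d = K+4" using K6 K_def by simp
  have iK: "int K = 4 * int m + int d - 4" using Keq by simp
  let ?P = "{((0,0,2,0),(2,0,0,1)), ((0,3,0,0),(3,0,1,0)), ((K,4,0,0),(0,0,0,m+1)), ((K+5,1,0,0),(0,0,1,m)), ((K+8,0,0,0),(0,2,0,m))}"
  have S: "(Hset a d :: 'k mpoly4 set) = BP ` ?P"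
    unfolding Hset_def Let_def  using amod by (simp add: m_def[symmetric] Keq xv_E B_def; (intro ins_cong B_cong)?; simp)
  show ?thesis
  proof (rule generic[OF S])
    show "\<forall>(u,v)\<in>?P. Wm a d (Et u) = Wm a d (Et v)"
      by (simp add: Wm_E; ((intro conjI)?; rule nat_int_eq; simp add: ia iK  algebra_simps))
    show "((0,0,2,0),(2,0,0,1)) \<in> ?P" "((0,3,0,0),(3,0,1,0)) \<in> ?P" by simp_all
    show "\<forall>f1 f2 f3 f4. f2 \<le> 2 \<longrightarrow> f3 \<le> 1 \<longrightarrow> a \<le> f2+3*f3+6*f4 \<longrightarrow> (\<exists>(u,v)\<in>?P. le4 v (f1,f2,f3,f4) \<and> nn u < nn v)"
      using am m1  by auto
    show "\<forall>(u,v)\<in>?P. u \<noteq> v \<and> ((\<forall>(u',v')\<in>?P. (u',v') \<noteq> (u,v) \<longrightarrow> \<not> le4 u' u \<and> \<not> le4 v' u)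
                 \<or> (\<forall>(u',v')\<in>?P. (u',v') \<noteq> (u,v) \<longrightarrow> \<not> le4 u' v \<and> \<not> le4 v' v))"
      using m1  by auto
    show "coprime a d" by (rule cop)
    show "0 < a" using a7 by simp
  qed
qed

lemma case3:
  assumes amod: "a mod 6 = 3" and cop: "coprime a d" and a7: "a \<ge> 7" and d0: "d > 0"
  shows "minimally_generates (Hset a d :: 'k::field mpoly4 set) (kernel_p4 a d)"
proof -
  define m where "m = a div 6"
  have am: "a = 6*m + 3" using amod m_def div_mult_mod_eq[of a 6] by linarith
  have ia: "int a = 6 * int m + 3" using am by simp
  have m1: "m \<ge> 1" using a7 am by simp
  have K6: "4*m+d \<ge> 2" using m1 d0 by simp
  define K where "K = 4*m+d-2"
  have Keq: "4*m+d = K+2" using K6 K_def by simp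
  have iK: "int K = 4 * int m + int d - 2" using Keq by simp
  let ?P = "{((0,0,2,0),(2,0,0,1)), ((0,3,0,0),(3,0,1,0)), ((K,3,0,0),(0,0,0,m+1)), ((K+5,0,0,0),(0,0,1,m))}"
  have S: "(Hset a d :: 'k mpoly4 set) = BP ` ?P"
    unfolding Hset_def Let_def  using amod by (simp add: m_def[symmetric] Keq xv_E B_def; (intro ins_cong B_cong)?; simp)
  show ?thesis
  proof (rule generic[OF S])
    show "\<forall>(u,v)\<in>?P. Wm a d (Et u) = Wm a d (Et v)"
      by (simp add: Wm_E; ((intro conjI)?; rule nat_int_eq; simp add: ia iK  algebra_simps))
    show "((0,0,2,0),(2,0,0,1)) \<in> ?P" "((0,3,0,0),(3,0,1,0)) \<in> ?P" by simp_all
    show "\<forall>f1 f2 f3 f4. f2 \<le> 2 \<longrightarrow> f3 \<le> 1 \<longrightarrow> a \<le> f2+3*f3+6*f4 \<longrightarrow> (\<exists>(u,v)\<in>?P. le4 v (f1,f2,f3,f4) \<and> nn u < nn v)"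
      using am m1  by auto
    show "\<forall>(u,v)\<in>?P. u \<noteq> v \<and> ((\<forall>(u',v')\<in>?P. (u',v') \<noteq> (u,v) \<longrightarrow> \<not> le4 u' u \<and> \<not> le4 v' u)
                 \<or> (\<forall>(u',v')\<in>?P. (u',v') \<noteq> (u,v) \<longrightarrow> \<not> le4 u' v \<and> \<not> le4 v' v))"
      using m1  by auto
    show "coprime a d" by (rule cop)
    show "0 < a" using a7 by simp
  qed
qed

lemma case4:
  assumes amod: "a mod 6 = 4" and cop: "coprime a d" and a7: "a \<ge> 7" and d0: "d > 0"
  shows "minimally_generates (Hset a d :: 'k::field mpoly4 set) (kernel_p4 a d)"
proof -
  define m where "m = a div 6"
  have am: "a = 6*m + 4" using amod m_def div_mult_mod_eq[of a 6] by linarith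
  have ia: "int a = 6 * int m + 4" using am by simp
  have m1: "m \<ge> 1" using a7 am by simp
  let ?P = "{((0,0,2,0),(2,0,0,1)), ((0,3,0,0),(3,0,1,0)), ((4*m+d,2,0,0),(0,0,0,m+1)), ((4*m+d+5,0,0,0),(0,1,1,m))}"
  have S: "(Hset a d :: 'k mpoly4 set) = BP ` ?P"
    unfolding Hset_def Let_def  using amod by (simp add: m_def[symmetric]  xv_E B_def; (intro ins_cong B_cong)?; simp)
  show ?thesis
  proof (rule generic[OF S])
    show "\<forall>(u,v)\<in>?P. Wm a d (Et u) = Wm a d (Et v)"
      by (simp add: Wm_E; ((intro conjI)?; rule nat_int_eq; simp add: ia   algebra_simps))
    show "((0,0,2,0),(2,0,0,1)) \<in> ?P" "((0,3,0,0),(3,0,1,0)) \<in> ?P" by simp_all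
    show "\<forall>f1 f2 f3 f4. f2 \<le> 2 \<longrightarrow> f3 \<le> 1 \<longrightarrow> a \<le> f2+3*f3+6*f4 \<longrightarrow> (\<exists>(u,v)\<in>?P. le4 v (f1,f2,f3,f4) \<and> nn u < nn v)"
      using am m1  by auto
    show "\<forall>(u,v)\<in>?P. u \<noteq> v \<and> ((\<forall>(u',v')\<in>?P. (u',v') \<noteq> (u,v) \<longrightarrow> \<not> le4 u' u \<and> \<not> le4 v' u)
                 \<or> (\<forall>(u',v')\<in>?P. (u',v') \<noteq> (u,v) \<longrightarrow> \<not> le4 u' v \<and> \<not> le4 v' v))"
      using m1  by auto
    show "coprime a d" by (rule cop)
    show "0 < a" using a7 by simp
  qed
qed

lemma case5:
  assumes amod: "a mod 6 = 5" and cop: "coprime a d" and a7: "a \<ge> 7" and d0: "d > 0"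
  shows "minimally_generates (Hset a d :: 'k::field mpoly4 set) (kernel_p4 a d)"
proof -
  define m where "m = a div 6"
  have am: "a = 6*m + 5" using amod m_def div_mult_mod_eq[of a 6] by linarith
  have ia: "int a = 6 * int m + 5" using am by simp
  have m1: "m \<ge> 1" using a7 am by simp
  let ?P = "{((0,0,2,0),(2,0,0,1)), ((0,3,0,0),(3,0,1,0)), ((4*m+d+2,1,0,0),(0,0,0,m+1)), ((4*m+d+7,0,0,0),(0,2,1,m))}"
  have S: "(Hset a d :: 'k mpoly4 set) = BP ` ?P"
    unfolding Hset_def Let_def  using amod by (simp add: m_def[symmetric]  xv_E B_def; (intro ins_cong B_cong)?; simp)
  show ?thesis
  proof (rule generic[OF S])
    show "\<forall>(u,v)\<in>?P. Wm a d (Et u) = Wm a d (Et v)"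
      by (simp add: Wm_E; ((intro conjI)?; rule nat_int_eq; simp add: ia   algebra_simps))
    show "((0,0,2,0),(2,0,0,1)) \<in> ?P" "((0,3,0,0),(3,0,1,0)) \<in> ?P" by simp_all
    show "\<forall>f1 f2 f3 f4. f2 \<le> 2 \<longrightarrow> f3 \<le> 1 \<longrightarrow> a \<le> f2+3*f3+6*f4 \<longrightarrow> (\<exists>(u,v)\<in>?P. le4 v (f1,f2,f3,f4) \<and> nn u < nn v)"
      using am m1  by auto
    show "\<forall>(u,v)\<in>?P. u \<noteq> v \<and> ((\<forall>(u',v')\<in>?P. (u',v') \<noteq> (u,v) \<longrightarrow> \<not> le4 u' u \<and> \<not> le4 v' u)
                 \<or> (\<forall>(u',v')\<in>?P. (u',v') \<noteq> (u,v) \<longrightarrow> \<not> le4 u' v \<and> \<not> le4 v' v))"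
      using m1  by auto
    show "coprime a d" by (rule cop)
    show "0 < a" using a7 by simp
  qed
qed

theorem theorem4p3:
  fixes a d :: nat
  assumes "d > 0" and "a \<ge> 7" and "coprime a d"
  shows "minimally_generates (Hset a d :: 'k::field mpoly4 set) (kernel_p4 a d)"
proof -
  have "a mod 6 < 6" by simp
  then have "a mod 6 = 0 \<or> a mod 6 = 1 \<or> a mod 6 = 2 \<or> a mod 6 = 3 \<or> a mod 6 = 4 \<or> a mod 6 = 5" by linarith
  then show ?thesis
    using case0[OF _ assms(3,2,1)] case1s[OF _ assms(3,2,1)] case1[OF _ assms(3,2,1)] case2[OF _ assms(3,2,1)]
      case3[OF _ assms(3,2,1)] case4[OF _ assms(3,2,1)] case5[OF _ assms(3,2,1)]
    by (elim disjE) blast+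
qed


end
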